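(* The couple $\big((\iota(H^1(\delta)),\|\cdot\|_{L^1(\ell^2)}),(\iota(H^2(\delta)),\|\cdot\|_{L^2(\ell^2)})\big)$ is $K$-closed in $\big(L^1([0,1],\ell^2),L^2([0,1],\ell^2)\big)$.
   Context: On $[0,1]$ with Lebesgue measure, $\mathcal{F}_n$ is generated by dyadic intervals of length $2^{-n}$, $\mathbb{E}_n$ the conditional expectation, $\Delta_0=\mathbb{E}_0$, $\Delta_n=\mathbb{E}_n-\mathbb{E}_{n-1}$. $\iota(f)=(\Delta_nf)_{n\ge0}$; $\iota(H^1(\delta))=\{(f_n)\in L^1(\ell^2):\Delta_nf_n=f_n\ \forall n\}$ and $\iota(H^2(\delta))=\{(f_n)\in L^2(\ell^2):\Delta_nf_n=f_n\ \forall n\}$. For Banach spaces $X_0,X_1$ continuously embedded in a common topological vector space, $t>0$ and $f\in X_0+X_1$, $K_t(f,X_0,X_1)=\inf\{\|g\|_{X_0}+t\|h\|_{X_1}: f=g+h,\ g\in X_0,h\in X_1\}$. If $Y_i\subset X_i$ ($i=0,1$), $(Y_0,Y_1)$ is $K$-closed in $(X_0,X_1)$ if there is $C$ with $K_t(f,Y_0,Y_1)\le CK_t(f,X_0,X_1)$ for all $t>0$ and $f\in Y_0+Y_1$. *)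

theory Defs
  imports "HOL-Analysis.Analysis"
begin

definition M01 :: "real measure" where
  "M01 = restrict_space lborel {0..1}"

text \<open>An l2-valued function on [0,1] is represented by its coordinate sequence
  F :: nat => real => real (F n x is the n-th coordinate at x).\<close>
type_synonym seqfun = "nat \<Rightarrow> real \<Rightarrow> real"

definition esqrt :: "ennreal \<Rightarrow> ennreal" where
  "esqrt e = (if e = \<infinity> then \<infinity> else ennreal (sqrt (enn2real e)))"

definition l2sq :: "seqfun \<Rightarrow> real \<Rightarrow> ennreal" where
  "l2sq F x = (\<Sum>n. ennreal ((F n x)\<^sup>2))"

definition L1l2_norm :: "seqfun \<Rightarrow> ennreal" where
  "L1l2_norm F = (\<integral>\<^sup>+ x. esqrt (l2sq F x) \<partial>M01)"

definition L2l2_norm :: "seqfun \<Rightarrow> ennreal" where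
  "L2l2_norm F = esqrt (\<integral>\<^sup>+ x. l2sq F x \<partial>M01)"

definition L1l2 :: "seqfun set" where
  "L1l2 = {F. (\<forall>n. F n \<in> borel_measurable M01) \<and> L1l2_norm F < \<infinity>}"

definition L2l2 :: "seqfun set" where
  "L2l2 = {F. (\<forall>n. F n \<in> borel_measurable M01) \<and> L2l2_norm F < \<infinity>}"

text \<open>Conditional expectation E_n w.r.t. the sigma-algebra generated by the dyadic
  intervals of length 2^-n: average over the dyadic interval containing x.\<close>
definition dyadic_interval :: "nat \<Rightarrow> real \<Rightarrow> real set" where
  "dyadic_interval n x =
     {of_int \<lfloor>2^n * x\<rfloor> / 2^n ..< (of_int \<lfloor>2^n * x\<rfloor> + 1) / 2^n}"

definition cond_exp_dyadic :: "nat \<Rightarrow> (real \<Rightarrow> real) \<Rightarrow> real \<Rightarrow> real" where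
  "cond_exp_dyadic n f x = 2^n * (LINT y:dyadic_interval n x|M01. f y)"

definition Delta :: "nat \<Rightarrow> (real \<Rightarrow> real) \<Rightarrow> real \<Rightarrow> real" where
  "Delta n f x = (if n = 0 then cond_exp_dyadic 0 f x
                  else cond_exp_dyadic n f x - cond_exp_dyadic (n - 1) f x)"

definition mart_diff :: "seqfun \<Rightarrow> bool" where
  "mart_diff F \<longleftrightarrow> (\<forall>n. AE x in M01. Delta n (F n) x = F n x)"

definition iota_H1 :: "seqfun set" where
  "iota_H1 = {F \<in> L1l2. mart_diff F}"

definition iota_H2 :: "seqfun set" where
  "iota_H2 = {F \<in> L2l2. mart_diff F}"

definition decomp :: "seqfun \<Rightarrow> seqfun \<Rightarrow> seqfun \<Rightarrow> bool" where
  "decomp F g h \<longleftrightarrow> (AE x in M01. \<forall>n. F n x = g n x + h n x)"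

definition Kfun :: "seqfun set \<Rightarrow> (seqfun \<Rightarrow> ennreal) \<Rightarrow> seqfun set \<Rightarrow> (seqfun \<Rightarrow> ennreal)
                    \<Rightarrow> real \<Rightarrow> seqfun \<Rightarrow> ennreal" where
  "Kfun X0 N0 X1 N1 t F =
     (INF gh \<in> {(g, h). g \<in> X0 \<and> h \<in> X1 \<and> decomp F g h}.
        N0 (fst gh) + ennreal t * N1 (snd gh))"

definition K_closed :: "seqfun set \<Rightarrow> (seqfun \<Rightarrow> ennreal) \<Rightarrow> seqfun set \<Rightarrow> (seqfun \<Rightarrow> ennreal)
   \<Rightarrow> seqfun set \<Rightarrow> (seqfun \<Rightarrow> ennreal) \<Rightarrow> seqfun set \<Rightarrow> (seqfun \<Rightarrow> ennreal) \<Rightarrow> bool" where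
  "K_closed Y0 NY0 Y1 NY1 X0 NX0 X1 NX1 \<longleftrightarrow>
     (\<exists>C::real. \<forall>t>0. \<forall>F. (\<exists>g\<in>Y0. \<exists>h\<in>Y1. decomp F g h) \<longrightarrow>
        Kfun Y0 NY0 Y1 NY1 t F \<le> ennreal C * Kfun X0 NX0 X1 NX1 t F)"

end

theory Submission imports Defs begin

lemma floor_half: "\<lfloor>(z::real)\<rfloor> = \<lfloor>2*z\<rfloor> div 2"
  using floor_divide_real_eq_div[of 2 "2*z"] by simp

lemma floor_level:
  assumes "k \<le> m" "\<lfloor>(2::real)^m * x\<rfloor> = \<lfloor>(2::real)^m * y\<rfloor>"
  shows "\<lfloor>(2::real)^k * x\<rfloor> = \<lfloor>(2::real)^k * y\<rfloor>"
  using assms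
proof (induction m)
  case 0 then show ?case by simp
next
  case (Suc m)
  show ?case
  proof (cases "k = Suc m")
    case True with Suc show ?thesis by simp
  next
    case False
    have e: "(2::real)^(Suc m) * z = 2 * (2^m * z)" for z by simp
    have "\<lfloor>(2::real)^m * x\<rfloor> = \<lfloor>(2::real)^(Suc m) * x\<rfloor> div 2"
      unfolding e by (rule floor_half)
    also have "\<dots> = \<lfloor>(2::real)^(Suc m) * y\<rfloor> div 2" using Suc.prems(2) by (rule arg_cong)
    also have "\<dots> = \<lfloor>(2::real)^m * y\<rfloor>"
      unfolding e by (rule floor_half[symmetric])
    finally have "\<lfloor>(2::real)^m * x\<rfloor> = \<lfloor>(2::real)^m * y\<rfloor>" .
    moreover have "k \<le> m" using Suc.prems(1) False by simp
    ultimately show ?thesis using Suc.IH by blast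
  qed
qed

lemma mem_dyadic: "y \<in> dyadic_interval m x \<longleftrightarrow> \<lfloor>(2::real)^m * y\<rfloor> = \<lfloor>(2::real)^m * x\<rfloor>"
proof -
  have p: "(0::real) < 2^m" by simp
  have "y \<in> dyadic_interval m x \<longleftrightarrow>
     of_int \<lfloor>2^m * x\<rfloor> \<le> 2^m * y \<and> 2^m * y < of_int \<lfloor>2^m * x\<rfloor> + 1"
    unfolding dyadic_interval_def using p
    by (simp add: pos_divide_le_eq pos_less_divide_eq mult.commute)
  also have "\<dots> \<longleftrightarrow> \<lfloor>(2::real)^m * y\<rfloor> = \<lfloor>(2::real)^m * x\<rfloor>"
    by (simp add: floor_eq_iff)
  finally show ?thesis .
qed

definition inv_lvl :: "nat \<Rightarrow> (real \<Rightarrow> 'a) \<Rightarrow> bool" where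
  "inv_lvl k h \<longleftrightarrow> (\<forall>x y. \<lfloor>(2::real)^k * x\<rfloor> = \<lfloor>(2::real)^k * y\<rfloor> \<longrightarrow> h x = h y)"

lemma inv_lvl_mono:
  assumes "inv_lvl k h" "k \<le> m" shows "inv_lvl m h"
  unfolding inv_lvl_def
proof (intro allI impI)
  fix x y assume "\<lfloor>(2::real)^m * x\<rfloor> = \<lfloor>(2::real)^m * y\<rfloor>"
  then have "\<lfloor>(2::real)^k * x\<rfloor> = \<lfloor>(2::real)^k * y\<rfloor>" by (rule floor_level[OF assms(2)])
  then show "h x = h y" using assms(1) unfolding inv_lvl_def by blast
qed

lemma dyadic_eq: "\<lfloor>(2::real)^k * x\<rfloor> = \<lfloor>(2::real)^k * y\<rfloor> \<Longrightarrow> dyadic_interval k x = dyadic_interval k y"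
  unfolding dyadic_interval_def by simp

lemma inv_Delta: "inv_lvl n (Delta n f)"
  unfolding inv_lvl_def
proof (intro allI impI)
  fix x y assume h: "\<lfloor>(2::real)^n * x\<rfloor> = \<lfloor>(2::real)^n * y\<rfloor>"
  then have "\<lfloor>(2::real)^(n-1) * x\<rfloor> = \<lfloor>(2::real)^(n-1) * y\<rfloor>"
    by (rule floor_level[of "n-1" n, OF diff_le_self])
  then have d2: "dyadic_interval (n-1) x = dyadic_interval (n-1) y" by (rule dyadic_eq)
  have d1: "dyadic_interval n x = dyadic_interval n y" using h by (rule dyadic_eq)
  have "\<lfloor>(2::real)^0 * x\<rfloor> = \<lfloor>(2::real)^0 * y\<rfloor>"
    using h by (rule floor_level[of 0 n, OF le0])
  then have d0: "dyadic_interval 0 x = dyadic_interval 0 y" by (rule dyadic_eq)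
  show "Delta n f x = Delta n f y"
    unfolding Delta_def cond_exp_dyadic_def d1 d2 d0 ..
qed

lemma inv_meas:
  assumes "inv_lvl n h"
  shows "(h::real\<Rightarrow>real) \<in> borel_measurable M01"
proof -
  define c where "c j = h (real_of_int j / 2^n)" for j :: int
  have eq: "h x = c \<lfloor>2^n * x\<rfloor>" for x
  proof -
    have "\<lfloor>(2::real)^n * (real_of_int \<lfloor>2^n * x\<rfloor> / 2^n)\<rfloor> = \<lfloor>(2::real)^n * x\<rfloor>" by simp
    then have "h (real_of_int \<lfloor>2^n * x\<rfloor> / 2^n) = h x" using assms unfolding inv_lvl_def by blast
    then show ?thesis unfolding c_def by simp
  qed
  have m: "(\<lambda>x. c \<lfloor>(2::real)^n * x\<rfloor>) \<in> borel_measurable lborel"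
    by measurable
  have heq: "h = (\<lambda>x. c \<lfloor>(2::real)^n * x\<rfloor>)" using eq by (intro ext) simp
  have "h \<in> borel_measurable lborel" by (simp only: heq m)
  then show ?thesis unfolding M01_def by (rule measurable_restrict_space1)
qed

lemma Delta_mult:
  assumes "inv_lvl (n-1) w"
  shows "Delta n (\<lambda>y. w y * f y) x = w x * Delta n f x"
proof -
  have ce: "cond_exp_dyadic m (\<lambda>y. w y * f y) x = w x * cond_exp_dyadic m f x"
    if "n - 1 \<le> m" for m
  proof -
    have e: "indicator (dyadic_interval m x) y *\<^sub>R (w y * f y) =
          w x * (indicator (dyadic_interval m x) y *\<^sub>R f y)" for y
    proof (cases "y \<in> dyadic_interval m x")
      case True
      then have "\<lfloor>(2::real)^m * y\<rfloor> = \<lfloor>(2::real)^m * x\<rfloor>" by (simp add: mem_dyadic)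
      note fl = this
      have "inv_lvl m w" by (rule inv_lvl_mono[OF assms that])
      then have "w y = w x" unfolding inv_lvl_def using fl by blast
      then show ?thesis by simp
    qed simp
    have "(LINT y:dyadic_interval m x|M01. w y * f y) = (LINT y|M01. w x * (indicator (dyadic_interval m x) y *\<^sub>R f y))"
      unfolding set_lebesgue_integral_def e ..
    also have "\<dots> = w x * (LINT y:dyadic_interval m x|M01. f y)"
      unfolding set_lebesgue_integral_def by (rule integral_mult_right_zero)
    finally have "(LINT y:dyadic_interval m x|M01. w y * f y) = w x * (LINT y:dyadic_interval m x|M01. f y)" .
    then show ?thesis unfolding cond_exp_dyadic_def by (simp only: mult.left_commute)
  qed
  show ?thesis
  proof (cases "n = 0")
    case True
    have "Delta n (\<lambda>y. w y * f y) x = cond_exp_dyadic 0 (\<lambda>y. w y * f y) x"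
      unfolding Delta_def using True by simp
    also have "\<dots> = w x * cond_exp_dyadic 0 f x"
      using True by (simp only: ce[of 0] diff_le_self)
    also have "\<dots> = w x * Delta n f x"
      unfolding Delta_def using True by simp
    finally show ?thesis .
  next
    case False
    have "Delta n (\<lambda>y. w y * f y) x = cond_exp_dyadic n (\<lambda>y. w y * f y) x - cond_exp_dyadic (n-1) (\<lambda>y. w y * f y) x"
      unfolding Delta_def using False by (simp only: if_False)
    also have "\<dots> = w x * cond_exp_dyadic n f x - w x * cond_exp_dyadic (n-1) f x"
      by (simp only: ce[of n, OF diff_le_self] ce[of "n-1", OF order_refl])
    also have "\<dots> = w x * Delta n f x"
      unfolding Delta_def using False by (simp only: if_False right_diff_distrib)
    finally show ?thesis .
  qed
qed

lemma floor_suc: "\<lfloor>(2::real)^m * z\<rfloor> = \<lfloor>(2::real)^(Suc m) * z\<rfloor> div 2"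
proof -
  have e: "(2::real)^(Suc m) * z = 2 * (2^m * z)" by simp
  show ?thesis unfolding e by (rule floor_half)
qed

lemma inv_indicator: "inv_lvl k (indicator (dyadic_interval k x) :: real \<Rightarrow> real)"
  unfolding inv_lvl_def
proof (intro allI impI)
  fix y z assume "\<lfloor>(2::real)^k * y\<rfloor> = \<lfloor>(2::real)^k * z\<rfloor>"
  then have "y \<in> dyadic_interval k x \<longleftrightarrow> z \<in> dyadic_interval k x" by (simp add: mem_dyadic)
  then show "indicator (dyadic_interval k x) y = (indicator (dyadic_interval k x) z :: real)"
    by (simp add: indicator_def)
qed

lemma integrable_ind:
  fixes f :: "real \<Rightarrow> real"
  assumes "integrable M01 f"
  shows "integrable M01 (\<lambda>z. indicator (dyadic_interval k x) z *\<^sub>R f z)"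
proof (rule Bochner_Integration.integrable_bound[OF assms])
  have "(indicator (dyadic_interval k x) :: real \<Rightarrow> real) \<in> borel_measurable M01" by (rule inv_meas[OF inv_indicator])
  moreover have "f \<in> borel_measurable M01" using assms by (rule borel_measurable_integrable)
  ultimately show "(\<lambda>z. indicator (dyadic_interval k x) z *\<^sub>R f z) \<in> borel_measurable M01"
    by (rule borel_measurable_scaleR)
  show "AE z in M01. norm (indicator (dyadic_interval k x) z *\<^sub>R f z) \<le> norm (f z)"
    by (intro AE_I2) (simp add: indicator_def)
qed

lemma Delta_abs:
  fixes f :: "real \<Rightarrow> real"
  assumes f: "integrable M01 f" and h: "\<lfloor>(2::real)^m * x\<rfloor> = \<lfloor>(2::real)^m * y\<rfloor>"
  shows "\<bar>Delta (Suc m) f x\<bar> = \<bar>Delta (Suc m) f y\<bar>"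
proof -
  define p where "p = \<lfloor>(2::real)^(Suc m) * x\<rfloor>"
  define q where "q = \<lfloor>(2::real)^(Suc m) * y\<rfloor>"
  define j where "j = \<lfloor>(2::real)^m * x\<rfloor>"
  have pj: "p div 2 = j" unfolding p_def j_def by (simp only: floor_suc[symmetric])
  have qj: "q div 2 = j" unfolding q_def j_def h by (simp only: floor_suc[symmetric])
  have J: "dyadic_interval m x = dyadic_interval m y" using h by (rule dyadic_eq)
  define IA where "IA = (LINT z:dyadic_interval (Suc m) x|M01. f z)"
  define IB where "IB = (LINT z:dyadic_interval (Suc m) y|M01. f z)"
  define IJ where "IJ = (LINT z:dyadic_interval m x|M01. f z)"
  have Dx: "Delta (Suc m) f x = 2^(Suc m) * IA - 2^m * IJ"
    unfolding Delta_def cond_exp_dyadic_def IA_def IJ_def by simp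
  have Dy: "Delta (Suc m) f y = 2^(Suc m) * IB - 2^m * IJ"
    unfolding Delta_def cond_exp_dyadic_def IB_def IJ_def J by simp
  show ?thesis
  proof (cases "p = q")
    case True
    then have "dyadic_interval (Suc m) x = dyadic_interval (Suc m) y"
      unfolding p_def q_def by (rule dyadic_eq)
    then have "IA = IB" unfolding IA_def IB_def by simp
    then show ?thesis using Dx Dy by simp
  next
    case False
    have ind: "indicator (dyadic_interval m x) z = indicator (dyadic_interval (Suc m) x) z
               + (indicator (dyadic_interval (Suc m) y) z :: real)" for z
    proof -
      define r where "r = \<lfloor>(2::real)^(Suc m) * z\<rfloor>"
      have "z \<in> dyadic_interval m x \<longleftrightarrow> r div 2 = j"
        unfolding mem_dyadic r_def j_def by (simp only: floor_suc[symmetric])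
      moreover have "z \<in> dyadic_interval (Suc m) x \<longleftrightarrow> r = p"
        unfolding mem_dyadic r_def p_def ..
      moreover have "z \<in> dyadic_interval (Suc m) y \<longleftrightarrow> r = q"
        unfolding mem_dyadic r_def q_def ..
      moreover have "r div 2 = j \<longleftrightarrow> r = p \<or> r = q" using pj qj False by presburger
      ultimately show ?thesis using False by (auto simp: indicator_def)
    qed
    have "IJ = (LINT z|M01. indicator (dyadic_interval (Suc m) x) z *\<^sub>R f z
                  + indicator (dyadic_interval (Suc m) y) z *\<^sub>R f z)"
      unfolding IJ_def set_lebesgue_integral_def ind by (simp add: algebra_simps)
    also have "\<dots> = IA + IB"
      unfolding IA_def IB_def set_lebesgue_integral_def
      by (rule Bochner_Integration.integral_add[OF integrable_ind[OF f] integrable_ind[OF f]])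
    finally have "IJ = IA + IB" .
    then have "Delta (Suc m) f x = 2^m * (IA - IB)" "Delta (Suc m) f y = 2^m * (IB - IA)"
      using Dx Dy by (simp_all add: algebra_simps)
    then show ?thesis by (simp add: abs_mult abs_minus_commute)
  qed
qed

lemma esqrt_ennreal: "0 \<le> r \<Longrightarrow> esqrt (ennreal r) = ennreal (sqrt r)"
  unfolding esqrt_def by simp

lemma esqrt_mono: "a \<le> b \<Longrightarrow> esqrt a \<le> esqrt b"
proof (cases "b = \<infinity>")
  case True then show ?thesis by (simp add: esqrt_def)
next
  case False
  assume ab: "a \<le> b"
  then have "a \<noteq> \<infinity>" using False by (auto simp: top_unique)
  have "enn2real a \<le> enn2real b" using ab False by (intro enn2real_mono) (auto simp: less_top)
  then show ?thesis using False \<open>a \<noteq> \<infinity>\<close>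
    unfolding esqrt_def by (simp add: ennreal_leI)
qed

lemma esqrt_fin: "esqrt e < \<infinity> \<Longrightarrow> e < \<infinity>"
  unfolding esqrt_def by (cases "e = \<infinity>") (auto simp: less_top)

lemma esqrt_meas[measurable]: "esqrt \<in> borel_measurable borel"
  unfolding esqrt_def by measurable

lemma l2sq_meas:
  assumes "\<And>n. F n \<in> borel_measurable M01"
  shows "l2sq F \<in> borel_measurable M01"
  unfolding l2sq_def using assms by measurable

lemma term_le_l2sq: "ennreal ((F n x)\<^sup>2) \<le> l2sq F x"
proof -
  have "sum (\<lambda>k. ennreal ((F k x)\<^sup>2)) {n} \<le> (\<Sum>k. ennreal ((F k x)\<^sup>2))"
    by (rule sum_le_suminf) (auto intro: summableI)
  then show ?thesis unfolding l2sq_def by simp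
qed

lemma abs_le_esqrt: "ennreal \<bar>F n x\<bar> \<le> esqrt (l2sq F x)"
proof -
  have "ennreal \<bar>F n x\<bar> = esqrt (ennreal ((F n x)\<^sup>2))"
    by (simp add: esqrt_ennreal)
  also have "\<dots> \<le> esqrt (l2sq F x)" by (rule esqrt_mono[OF term_le_l2sq])
  finally show ?thesis .
qed

lemma L1_integrable:
  assumes "F \<in> L1l2" shows "integrable M01 (F n)"
proof (rule integrableI_bounded)
  show "F n \<in> borel_measurable M01" using assms unfolding L1l2_def by simp
  have "(\<integral>\<^sup>+ x. ennreal (norm (F n x)) \<partial>M01) \<le> L1l2_norm F"
    unfolding L1l2_norm_def by (rule nn_integral_mono) (simp add: abs_le_esqrt)
  also have "\<dots> < \<infinity>" using assms unfolding L1l2_def by simp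
  finally show "(\<integral>\<^sup>+ x. ennreal (norm (F n x)) \<partial>M01) < \<infinity>" .
qed

lemma M01_space: "space M01 = {0..1}"
  unfolding M01_def by simp

lemma M01_total: "emeasure M01 (space M01) = 1"
  unfolding M01_def by (simp add: emeasure_restrict_space)

lemma abs_le_sq: "\<bar>t::real\<bar> \<le> 1 + t\<^sup>2"
proof (cases "\<bar>t\<bar> \<le> 1")
  case True
  have "0 \<le> t\<^sup>2" by simp
  with True show ?thesis by linarith
next
  case False
  have "\<bar>t\<bar> * 1 \<le> \<bar>t\<bar> * \<bar>t\<bar>" using False by (intro mult_left_mono) auto
  also have "\<bar>t\<bar> * \<bar>t\<bar> = t\<^sup>2" by (simp add: power2_eq_square)
  finally show ?thesis by linarith
qed

lemma L2_integrable:
  assumes "F \<in> L2l2" shows "integrable M01 (F n)"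
proof (rule integrableI_bounded)
  have m: "F n \<in> borel_measurable M01" using assms unfolding L2l2_def by simp
  then show "F n \<in> borel_measurable M01" .
  have "esqrt (\<integral>\<^sup>+ x. l2sq F x \<partial>M01) < \<infinity>"
    using assms unfolding L2l2_def L2l2_norm_def by simp
  then have fin: "(\<integral>\<^sup>+ x. l2sq F x \<partial>M01) < \<infinity>" by (rule esqrt_fin)
  have "(\<integral>\<^sup>+ x. ennreal (norm (F n x)) \<partial>M01) \<le> (\<integral>\<^sup>+ x. 1 + ennreal ((F n x)\<^sup>2) \<partial>M01)"
  proof (rule nn_integral_mono)
    fix x
    have "\<bar>F n x\<bar> \<le> 1 + (F n x)\<^sup>2" by (rule abs_le_sq)
    then have "ennreal \<bar>F n x\<bar> \<le> ennreal (1 + (F n x)\<^sup>2)" by (rule ennreal_leI)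
    then show "ennreal (norm (F n x)) \<le> 1 + ennreal ((F n x)\<^sup>2)" by (simp add: ennreal_plus)
  qed
  also have "\<dots> = (\<integral>\<^sup>+ x. 1 \<partial>M01) + (\<integral>\<^sup>+ x. ennreal ((F n x)\<^sup>2) \<partial>M01)"
    by (rule nn_integral_add) (use m in auto)
  also have "\<dots> \<le> 1 + (\<integral>\<^sup>+ x. l2sq F x \<partial>M01)"
    by (intro add_mono nn_integral_mono term_le_l2sq) (simp add: M01_total)
  also have "\<dots> < \<infinity>" using fin by (simp add: less_top)
  finally show "(\<integral>\<^sup>+ x. ennreal (norm (F n x)) \<partial>M01) < \<infinity>" .
qed


lemma RA:
  fixes l p G2 H2 :: real
  assumes l: "l > 0" and p: "p > l\<^sup>2" and pb: "p \<le> 2*G2 + 2*H2" and G: "G2 \<ge> 0" and H: "H2 \<ge> 0"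
  shows "sqrt p \<le> 2 * sqrt G2 + 4 * H2 / l"
proof (cases "4 * H2 \<le> p")
  case True
  then have "p \<le> 4 * G2" using pb by linarith
  then have "sqrt p \<le> sqrt (4 * G2)" by (rule real_sqrt_le_mono)
  also have "sqrt (4 * G2) = 2 * sqrt G2" by (simp add: real_sqrt_mult)
  finally have "sqrt p \<le> 2 * sqrt G2" .
  moreover have "0 \<le> 4 * H2 / l" using H l by simp
  ultimately show ?thesis by linarith
next
  case False
  have p0: "p \<ge> 0" using p by (smt (verit) zero_le_power2)
  have "l < sqrt p" using p l by (metis abs_of_pos real_less_rsqrt)
  then have "sqrt p * l \<le> sqrt p * sqrt p" using l p0 by (intro mult_left_mono) auto
  also have "\<dots> = p" using p0 by simp
  finally have "sqrt p * l \<le> p" .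
  then have "sqrt p \<le> p / l" using l by (simp add: pos_le_divide_eq)
  also have "\<dots> \<le> 4 * H2 / l" using False l by (intro divide_right_mono) auto
  finally have "sqrt p \<le> 4 * H2 / l" .
  moreover have "0 \<le> 2 * sqrt G2" using G by simp
  ultimately show ?thesis by linarith
qed

lemma RB:
  fixes l p q G2 H2 :: real
  assumes l: "l > 0" and q1: "q \<le> p" and q2: "q \<le> l\<^sup>2" and pb: "p \<le> 2*G2 + 2*H2"
    and G: "G2 \<ge> 0" and H: "H2 \<ge> 0"
  shows "q \<le> 2 * l * sqrt G2 + 2 * H2"
proof (cases "sqrt G2 \<le> l")
  case True
  have "G2 = sqrt G2 * sqrt G2" using G by simp
  also have "\<dots> \<le> l * sqrt G2" using True G by (intro mult_right_mono) auto
  finally show ?thesis using q1 pb by linarith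
next
  case False
  have "l\<^sup>2 = l * l" by (simp add: power2_eq_square)
  also have "\<dots> \<le> l * sqrt G2" using False l by (intro mult_left_mono) auto
  finally have "l\<^sup>2 \<le> l * sqrt G2" .
  moreover have "0 \<le> l * sqrt G2" using l G by simp
  ultimately show ?thesis using q2 H by linarith
qed

lemma RC:
  fixes A B t :: real
  assumes A: "A \<ge> 0" and B: "B \<ge> 0" and t: "t > 0"
    and l: "l = (if A + t * sqrt B > 0 then (A + t * sqrt B) / t\<^sup>2 else 1)"
  shows "l > 0" "2*A + 4*B/l + t * sqrt (2*l*A + 2*B) \<le> 8 * (A + t * sqrt B)"
proof -
  define s where "s = A + t * sqrt B"
  have s0: "s \<ge> 0" unfolding s_def using A B t by simp
  show "l > 0" using l t s0 unfolding s_def[symmetric] by auto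
  show "2*A + 4*B/l + t * sqrt (2*l*A + 2*B) \<le> 8 * (A + t * sqrt B)"
  proof (cases "s > 0")
    case False
    then have "s = 0" using s0 by simp
    then have "A = 0" "t * sqrt B = 0" unfolding s_def using A B t by (smt (verit) mult_nonneg_nonneg real_sqrt_ge_zero)+
    then have "B = 0" using t by simp
    then show ?thesis using \<open>A = 0\<close> by simp
  next
    case True
    have ll: "l = s / t\<^sup>2" using l True unfolding s_def by simp
    have As: "A \<le> s" and Bs: "t * sqrt B \<le> s" unfolding s_def using A B t by simp_all
    have tB: "t\<^sup>2 * B = (t * sqrt B)\<^sup>2" using B by (simp add: power_mult_distrib)
    have "(t * sqrt B)\<^sup>2 \<le> s\<^sup>2" using Bs B t by (intro power_mono) auto
    then have tB2: "t\<^sup>2 * B \<le> s\<^sup>2" using tB by simp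
    have "4*B/l = 4 * (t\<^sup>2 * B) / s" unfolding ll using True t by (simp add: field_simps)
    also have "\<dots> \<le> 4 * s\<^sup>2 / s" using tB2 True by (intro divide_right_mono) auto
    also have "\<dots> = 4 * s" using True by (simp add: power2_eq_square)
    finally have t2: "4*B/l \<le> 4 * s" .
    have eq1: "t * sqrt (2*l*A + 2*B) = sqrt (t\<^sup>2 * (2*l*A + 2*B))"
      using t by (simp add: real_sqrt_mult)
    have eq2: "t\<^sup>2 * (2*l*A + 2*B) = 2*(s*A) + 2*(t\<^sup>2*B)" unfolding ll using t by (simp add: field_simps)
    have "s * A \<le> s * s" using As True by (intro mult_left_mono) auto
    then have "t\<^sup>2 * (2*l*A + 2*B) \<le> 4 * s\<^sup>2" unfolding eq2 using tB2 by (simp add: power2_eq_square)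
    then have "t * sqrt (2*l*A + 2*B) \<le> sqrt (4 * s\<^sup>2)"
      unfolding eq1 by (rule real_sqrt_le_mono)
    also have "sqrt (4 * s\<^sup>2) = 2 * s" using True by (simp add: real_sqrt_mult)
    finally have t3: "t * sqrt (2*l*A + 2*B) \<le> 2 * s" .
    have "2*A + 4*B/l + t * sqrt (2*l*A + 2*B) \<le> 8 * s" using t2 t3 As by linarith
    then show ?thesis unfolding s_def .
  qed
qed


lemma sq_le_2: "(a + b :: real)\<^sup>2 \<le> 2 * a\<^sup>2 + 2 * b\<^sup>2"
proof -
  have "0 \<le> (a - b)\<^sup>2" by simp
  then show ?thesis unfolding power2_sum power2_diff by linarith
qed

lemma pointwise:
  fixes u v z :: "nat \<Rightarrow> real" and l :: real and W :: "nat \<Rightarrow> real"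
  assumes l: "l > 0" and zuv: "\<And>n. z n = u n + v n"
    and uf: "(\<Sum>n. ennreal ((u n)\<^sup>2)) \<noteq> \<infinity>" and vf: "(\<Sum>n. ennreal ((v n)\<^sup>2)) \<noteq> \<infinity>"
    and W_def: "\<And>n. W n = (if (\<Sum>k<Suc n. (z k)\<^sup>2) \<le> l\<^sup>2 then 1 else 0)"
  shows "esqrt (\<Sum>n. ennreal (((1 - W n) * z n)\<^sup>2)) \<le>
           2 * esqrt (\<Sum>n. ennreal ((u n)\<^sup>2)) + ennreal (4/l) * (\<Sum>n. ennreal ((v n)\<^sup>2))"
    and "(\<Sum>n. ennreal ((W n * z n)\<^sup>2)) \<le>
           ennreal (2*l) * esqrt (\<Sum>n. ennreal ((u n)\<^sup>2)) + 2 * (\<Sum>n. ennreal ((v n)\<^sup>2))"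
proof -
  have su: "summable (\<lambda>n. (u n)\<^sup>2)" by (rule summable_suminf_not_top) (use uf in simp_all)
  have sv: "summable (\<lambda>n. (v n)\<^sup>2)" by (rule summable_suminf_not_top) (use vf in simp_all)
  define G2 where "G2 = (\<Sum>n. (u n)\<^sup>2)"
  define H2 where "H2 = (\<Sum>n. (v n)\<^sup>2)"
  have G0: "G2 \<ge> 0" unfolding G2_def by (rule suminf_nonneg[OF su]) simp
  have H0: "H2 \<ge> 0" unfolding H2_def by (rule suminf_nonneg[OF sv]) simp
  have eu: "(\<Sum>n. ennreal ((u n)\<^sup>2)) = ennreal G2" unfolding G2_def
    by (rule suminf_ennreal2[OF _ su]) simp
  have ev: "(\<Sum>n. ennreal ((v n)\<^sup>2)) = ennreal H2" unfolding H2_def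
    by (rule suminf_ennreal2[OF _ sv]) simp
  have esG: "esqrt (ennreal G2) = ennreal (sqrt G2)" using G0 by (rule esqrt_ennreal)
  have zle: "(z n)\<^sup>2 \<le> 2*(u n)\<^sup>2 + 2*(v n)\<^sup>2" for n unfolding zuv by (rule sq_le_2)
  have s2: "summable (\<lambda>n. 2*(u n)\<^sup>2 + 2*(v n)\<^sup>2)"
    by (intro summable_add summable_mult su sv)
  have sz: "summable (\<lambda>n. (z n)\<^sup>2)"
    by (rule summable_comparison_test'[OF s2, of 0]) (use zle in simp)
  define p where "p = (\<Sum>n. (z n)\<^sup>2)"
  have "p \<le> (\<Sum>n. 2*(u n)\<^sup>2 + 2*(v n)\<^sup>2)" unfolding p_def by (rule suminf_le[OF zle sz s2])
  also have "(\<Sum>n. 2*(u n)\<^sup>2 + 2*(v n)\<^sup>2) = (\<Sum>n. 2*(u n)\<^sup>2) + (\<Sum>n. 2*(v n)\<^sup>2)"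
    by (rule suminf_add[symmetric]) (intro summable_mult su sv)+
  also have "\<dots> = 2*G2 + 2*H2" unfolding G2_def H2_def by (simp add: suminf_mult su sv)
  finally have pb: "p \<le> 2*G2 + 2*H2" .
  have Tle: "(\<Sum>k<Suc n. (z k)\<^sup>2) \<le> p" for n unfolding p_def
    by (rule sum_le_suminf[OF sz]) auto
  have W01: "W n = 0 \<or> W n = 1" for n unfolding W_def by simp
  have Wmono: "W n = 1" if "W N = 1" "n \<le> N" for n N
  proof -
    have "(\<Sum>k<Suc n. (z k)\<^sup>2) \<le> (\<Sum>k<Suc N. (z k)\<^sup>2)"
      by (rule sum_mono2) (use that in auto)
    moreover have "(\<Sum>k<Suc N. (z k)\<^sup>2) \<le> l\<^sup>2" using that(1) unfolding W_def by (simp split: if_splits)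
    ultimately show ?thesis unfolding W_def by simp
  qed
  have bt: "(W n * z n)\<^sup>2 \<le> (z n)\<^sup>2" for n using W01[of n] by auto
  have sb: "summable (\<lambda>n. (W n * z n)\<^sup>2)"
    by (rule summable_comparison_test'[OF sz, of 0]) (use bt in simp)
  define q where "q = (\<Sum>n. (W n * z n)\<^sup>2)"
  have q1: "q \<le> p" unfolding q_def p_def by (rule suminf_le[OF bt sb sz])
  have claim: "(\<Sum>n<N. (W n * z n)\<^sup>2) \<le> l\<^sup>2 \<and>
      ((\<forall>n<N. W n = 1) \<longrightarrow> (\<Sum>n<N. (W n * z n)\<^sup>2) = (\<Sum>n<N. (z n)\<^sup>2))" for N
  proof (induction N)
    case 0 then show ?case by simp
  next
    case (Suc N)
    show ?case
    proof (cases "W N = 1")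
      case True
      then have all: "\<forall>n<Suc N. W n = 1" using Wmono by auto
      then have "(\<Sum>n<N. (W n * z n)\<^sup>2) = (\<Sum>n<N. (z n)\<^sup>2)" using Suc.IH by auto
      then have e: "(\<Sum>n<Suc N. (W n * z n)\<^sup>2) = (\<Sum>n<Suc N. (z n)\<^sup>2)" using True by simp
      have "(\<Sum>n<Suc N. (z n)\<^sup>2) \<le> l\<^sup>2" using True unfolding W_def by (simp split: if_splits)
      then show ?thesis using e by simp
    next
      case False
      then have "W N = 0" using W01 by blast
      then have "(\<Sum>n<Suc N. (W n * z n)\<^sup>2) = (\<Sum>n<N. (W n * z n)\<^sup>2)" by simp
      then show ?thesis using Suc.IH False by auto
    qed
  qed
  have q2: "q \<le> l\<^sup>2" unfolding q_def
    by (rule suminf_le_const[OF sb]) (use claim in blast)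
  have qb: "q \<le> 2 * l * sqrt G2 + 2 * H2" by (rule RB[OF l q1 q2 pb G0 H0])
  have eq: "(\<Sum>n. ennreal ((W n * z n)\<^sup>2)) = ennreal q" unfolding q_def
    by (rule suminf_ennreal2[OF _ sb]) simp
  have "ennreal q \<le> ennreal (2 * l * sqrt G2 + 2 * H2)" using qb by (rule ennreal_leI)
  also have "\<dots> = ennreal (2*l) * ennreal (sqrt G2) + 2 * ennreal H2"
    using l G0 H0 by (simp add: ennreal_plus ennreal_mult)
  finally show "(\<Sum>n. ennreal ((W n * z n)\<^sup>2)) \<le>
           ennreal (2*l) * esqrt (\<Sum>n. ennreal ((u n)\<^sup>2)) + 2 * (\<Sum>n. ennreal ((v n)\<^sup>2))"
    unfolding eq eu ev esG .
  have at: "((1 - W n) * z n)\<^sup>2 \<le> (z n)\<^sup>2" for n using W01[of n] by auto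
  have sa: "summable (\<lambda>n. ((1 - W n) * z n)\<^sup>2)"
    by (rule summable_comparison_test'[OF sz, of 0]) (use at in simp)
  define r where "r = (\<Sum>n. ((1 - W n) * z n)\<^sup>2)"
  have r0: "r \<ge> 0" unfolding r_def by (rule suminf_nonneg[OF sa]) simp
  have eqa: "(\<Sum>n. ennreal (((1 - W n) * z n)\<^sup>2)) = ennreal r" unfolding r_def
    by (rule suminf_ennreal2[OF _ sa]) simp
  show "esqrt (\<Sum>n. ennreal (((1 - W n) * z n)\<^sup>2)) \<le>
           2 * esqrt (\<Sum>n. ennreal ((u n)\<^sup>2)) + ennreal (4/l) * (\<Sum>n. ennreal ((v n)\<^sup>2))"
  proof (cases "p \<le> l\<^sup>2")
    case True
    have "W n = 1" for n using Tle[of n] True unfolding W_def by simp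
    then have "r = 0" unfolding r_def by simp
    then show ?thesis unfolding eqa by (simp add: esqrt_def)
  next
    case False
    have "r \<le> p" unfolding r_def p_def by (rule suminf_le[OF at sa sz])
    then have "sqrt r \<le> sqrt p" by (rule real_sqrt_le_mono)
    also have "sqrt p \<le> 2 * sqrt G2 + 4 * H2 / l"
      by (rule RA[OF l _ pb G0 H0]) (use False in simp)
    finally have "ennreal (sqrt r) \<le> ennreal (2 * sqrt G2 + 4 * H2 / l)" by (rule ennreal_leI)
    also have "\<dots> = ennreal (2 * sqrt G2) + ennreal ((4/l) * H2)"
      using l G0 H0 by (simp add: ennreal_plus)
    also have "\<dots> = 2 * ennreal (sqrt G2) + ennreal (4/l) * ennreal H2"
    proof -
      have e1: "ennreal ((4/l) * H2) = ennreal (4/l) * ennreal H2" by (rule ennreal_mult) (use l H0 in auto)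
      have e2: "ennreal (2 * sqrt G2) = 2 * ennreal (sqrt G2)" using G0 by (simp add: ennreal_mult)
      show ?thesis by (simp only: e1 e2)
    qed
    finally show ?thesis unfolding eqa eu ev esG using r0 by (simp add: esqrt_ennreal)
  qed
qed


lemma inv_lvl_sum:
  assumes "\<And>k. k \<in> A \<Longrightarrow> inv_lvl m (f k)"
  shows "inv_lvl m (\<lambda>x. \<Sum>k\<in>A. (f k x :: real))"
  unfolding inv_lvl_def
proof (intro allI impI)
  fix x y assume fl: "\<lfloor>(2::real)^m * x\<rfloor> = \<lfloor>(2::real)^m * y\<rfloor>"
  have "f k x = f k y" if "k \<in> A" for k using assms[OF that] fl unfolding inv_lvl_def by blast
  then show "(\<Sum>k\<in>A. f k x) = (\<Sum>k\<in>A. f k y)" by (rule sum.cong[OF refl])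
qed

lemma inv_lvl_comb:
  assumes "inv_lvl m f" "inv_lvl m g"
  shows "inv_lvl m (\<lambda>x. H (f x) (g x))"
  using assms unfolding inv_lvl_def by metis

lemma inv_lvl_comp:
  assumes "inv_lvl m f"
  shows "inv_lvl m (\<lambda>x. H (f x))"
  using assms unfolding inv_lvl_def by metis

lemma l2sq_fin_AE:
  assumes "F \<in> L2l2" shows "AE x in M01. l2sq F x \<noteq> \<infinity>"
proof -
  have m: "l2sq F \<in> borel_measurable M01" using assms unfolding L2l2_def by (intro l2sq_meas) simp
  have "esqrt (\<integral>\<^sup>+ x. l2sq F x \<partial>M01) < \<infinity>"
    using assms unfolding L2l2_def L2l2_norm_def by simp
  then have "(\<integral>\<^sup>+ x. l2sq F x \<partial>M01) < \<infinity>" by (rule esqrt_fin)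
  then show ?thesis using nn_integral_PInf_AE[OF m] by simp
qed

lemma l1sq_fin_AE:
  assumes "F \<in> L1l2" shows "AE x in M01. l2sq F x \<noteq> \<infinity>"
proof -
  have m: "l2sq F \<in> borel_measurable M01" using assms unfolding L1l2_def by (intro l2sq_meas) simp
  then have m2: "(\<lambda>x. esqrt (l2sq F x)) \<in> borel_measurable M01" by measurable
  have "(\<integral>\<^sup>+ x. esqrt (l2sq F x) \<partial>M01) \<noteq> \<infinity>"
    using assms unfolding L1l2_def L1l2_norm_def by (simp add: less_top)
  then have "AE x in M01. esqrt (l2sq F x) \<noteq> \<infinity>" using nn_integral_PInf_AE[OF m2] by simp
  then show ?thesis by eventually_elim (auto simp: esqrt_def)
qed

lemma core:
  fixes ft g h :: seqfun and l :: real and W a b :: seqfun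
  assumes l: "l > 0"
    and inv1: "\<And>n. inv_lvl n (ft n)"
    and inv2: "\<And>n. inv_lvl (n-1) (\<lambda>x. (ft n x)\<^sup>2)"
    and fx: "\<And>n x. Delta n (ft n) x = ft n x"
    and g: "g \<in> L1l2" and h: "h \<in> L2l2"
    and ae: "AE x in M01. \<forall>n. ft n x = g n x + h n x"
    and W_def: "\<And>n x. W n x = (if (\<Sum>k<Suc n. (ft k x)\<^sup>2) \<le> l\<^sup>2 then 1 else 0)"
    and a_def: "\<And>n x. a n x = (1 - W n x) * ft n x"
    and b_def: "\<And>n x. b n x = W n x * ft n x"
  shows "a \<in> iota_H1" "b \<in> iota_H2"
   "L1l2_norm a \<le> 2 * L1l2_norm g + ennreal (4/l) * (\<integral>\<^sup>+x. l2sq h x \<partial>M01)"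
   "(\<integral>\<^sup>+x. l2sq b x \<partial>M01) \<le> ennreal (2*l) * L1l2_norm g + 2 * (\<integral>\<^sup>+x. l2sq h x \<partial>M01)"
proof -
  have invS: "inv_lvl (n-1) (\<lambda>x. \<Sum>k<Suc n. (ft k x)\<^sup>2)" for n
  proof (rule inv_lvl_sum)
    fix k assume "k \<in> {..<Suc n}"
    then have k: "k \<le> n" by simp
    show "inv_lvl (n-1) (\<lambda>x. (ft k x)\<^sup>2)"
    proof (cases "k = n")
      case True then show ?thesis using inv2 by simp
    next
      case False
      then have "k \<le> n - 1" using k by simp
      then have "inv_lvl (n-1) (ft k)" by (rule inv_lvl_mono[OF inv1])
      then show ?thesis by (rule inv_lvl_comp)
    qed
  qed
  have W_eq: "W n = (\<lambda>x. if (\<Sum>k<Suc n. (ft k x)\<^sup>2) \<le> l\<^sup>2 then 1 else 0)" for n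
    using W_def by (intro ext) simp
  have invW: "inv_lvl (n-1) (W n)" for n
    unfolding W_eq by (rule inv_lvl_comp[OF invS])
  have invW1: "inv_lvl (n-1) (\<lambda>x. 1 - W n x)" for n by (rule inv_lvl_comp[OF invW])
  have a_eq: "a n = (\<lambda>x. (1 - W n x) * ft n x)" for n using a_def by (intro ext) simp
  have b_eq: "b n = (\<lambda>x. W n x * ft n x)" for n using b_def by (intro ext) simp
  have ma: "a n \<in> borel_measurable M01" for n
  proof -
    have "inv_lvl n (\<lambda>x. 1 - W n x)" by (rule inv_lvl_mono[OF invW1]) simp
    then have "inv_lvl n (a n)" unfolding a_eq by (rule inv_lvl_comb[OF _ inv1])
    then show ?thesis by (rule inv_meas)
  qed
  have mb: "b n \<in> borel_measurable M01" for n
  proof -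
    have "inv_lvl n (W n)" by (rule inv_lvl_mono[OF invW]) simp
    then have "inv_lvl n (b n)" unfolding b_eq by (rule inv_lvl_comb[OF _ inv1])
    then show ?thesis by (rule inv_meas)
  qed
  have mda: "mart_diff a" unfolding mart_diff_def
  proof (intro allI AE_I2)
    fix n x
    show "Delta n (a n) x = a n x"
      unfolding a_eq using Delta_mult[OF invW1[of n], where f="ft n" and x=x] fx by simp
  qed
  have mdb: "mart_diff b" unfolding mart_diff_def
  proof (intro allI AE_I2)
    fix n x
    show "Delta n (b n) x = b n x"
      unfolding b_eq using Delta_mult[OF invW[of n], where f="ft n" and x=x] fx by simp
  qed
  have gf: "AE x in M01. l2sq g x \<noteq> \<infinity>" by (rule l1sq_fin_AE[OF g])
  have hf: "AE x in M01. l2sq h x \<noteq> \<infinity>" by (rule l2sq_fin_AE[OF h])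
  have mg: "l2sq g \<in> borel_measurable M01" using g unfolding L1l2_def by (intro l2sq_meas) simp
  have mh: "l2sq h \<in> borel_measurable M01" using h unfolding L2l2_def by (intro l2sq_meas) simp
  have mg2: "(\<lambda>x. esqrt (l2sq g x)) \<in> borel_measurable M01" using mg by measurable
  have pa: "AE x in M01. esqrt (l2sq a x) \<le> 2 * esqrt (l2sq g x) + ennreal (4/l) * l2sq h x"
    using ae gf hf
  proof eventually_elim
    case (elim x)
    show ?case unfolding l2sq_def a_def
      by (rule pointwise(1)[OF l, of "\<lambda>n. ft n x" "\<lambda>n. g n x" "\<lambda>n. h n x" "\<lambda>n. W n x"])
         (use elim W_def in \<open>simp_all add: l2sq_def\<close>)
  qed
  have pb: "AE x in M01. l2sq b x \<le> ennreal (2*l) * esqrt (l2sq g x) + 2 * l2sq h x"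
    using ae gf hf
  proof eventually_elim
    case (elim x)
    show ?case unfolding l2sq_def b_def
      by (rule pointwise(2)[OF l, of "\<lambda>n. ft n x" "\<lambda>n. g n x" "\<lambda>n. h n x" "\<lambda>n. W n x"])
         (use elim W_def in \<open>simp_all add: l2sq_def\<close>)
  qed
  have "L1l2_norm a \<le> (\<integral>\<^sup>+x. 2 * esqrt (l2sq g x) + ennreal (4/l) * l2sq h x \<partial>M01)"
    unfolding L1l2_norm_def by (rule nn_integral_mono_AE[OF pa])
  also have "\<dots> = 2 * L1l2_norm g + ennreal (4/l) * (\<integral>\<^sup>+x. l2sq h x \<partial>M01)"
    unfolding L1l2_norm_def using mg2 mh
    by (simp add: nn_integral_add nn_integral_cmult)
  finally show na: "L1l2_norm a \<le> 2 * L1l2_norm g + ennreal (4/l) * (\<integral>\<^sup>+x. l2sq h x \<partial>M01)" .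
  have "(\<integral>\<^sup>+x. l2sq b x \<partial>M01) \<le> (\<integral>\<^sup>+x. ennreal (2*l) * esqrt (l2sq g x) + 2 * l2sq h x \<partial>M01)"
    by (rule nn_integral_mono_AE[OF pb])
  also have "\<dots> = ennreal (2*l) * L1l2_norm g + 2 * (\<integral>\<^sup>+x. l2sq h x \<partial>M01)"
    unfolding L1l2_norm_def using mg2 mh
    by (simp add: nn_integral_add nn_integral_cmult)
  finally show nb: "(\<integral>\<^sup>+x. l2sq b x \<partial>M01) \<le> ennreal (2*l) * L1l2_norm g + 2 * (\<integral>\<^sup>+x. l2sq h x \<partial>M01)" .
  have gfin: "L1l2_norm g < \<infinity>" using g unfolding L1l2_def by simp
  have "esqrt (\<integral>\<^sup>+ x. l2sq h x \<partial>M01) < \<infinity>" using h unfolding L2l2_def L2l2_norm_def by simp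
  then have hfin: "(\<integral>\<^sup>+ x. l2sq h x \<partial>M01) < \<infinity>" by (rule esqrt_fin)
  have "2 * L1l2_norm g + ennreal (4/l) * (\<integral>\<^sup>+x. l2sq h x \<partial>M01) < \<infinity>"
    using gfin hfin by (simp add: ennreal_mult_less_top)
  then have "L1l2_norm a < \<infinity>" using na by (rule le_less_trans[rotated])
  then show "a \<in> iota_H1" unfolding iota_H1_def L1l2_def using ma mda by simp
  have "ennreal (2*l) * L1l2_norm g + 2 * (\<integral>\<^sup>+x. l2sq h x \<partial>M01) < \<infinity>"
    using gfin hfin by (simp add: ennreal_mult_less_top)
  then have "(\<integral>\<^sup>+x. l2sq b x \<partial>M01) < \<infinity>" using nb by (rule le_less_trans[rotated])
  then have "L2l2_norm b < \<infinity>" unfolding L2l2_norm_def esqrt_def by (simp add: less_top)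
  then show "b \<in> iota_H2" unfolding iota_H2_def L2l2_def using mb mdb by simp
qed

lemma ind_meas: "(\<lambda>z. indicator (dyadic_interval k x) z :: real) \<in> borel_measurable M01"
  using inv_meas[OF inv_indicator] by simp

lemma cond_exp_add:
  fixes u v :: "real \<Rightarrow> real"
  assumes u: "integrable M01 u" and v: "integrable M01 v"
  shows "cond_exp_dyadic k (\<lambda>y. u y + v y) x = cond_exp_dyadic k u x + cond_exp_dyadic k v x"
proof -
  have "(LINT y:dyadic_interval k x|M01. u y + v y) =
        (LINT y|M01. indicator (dyadic_interval k x) y *\<^sub>R u y + indicator (dyadic_interval k x) y *\<^sub>R v y)"
    unfolding set_lebesgue_integral_def scaleR_add_right ..
  also have "\<dots> = (LINT y:dyadic_interval k x|M01. u y) + (LINT y:dyadic_interval k x|M01. v y)"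
    unfolding set_lebesgue_integral_def
    by (rule Bochner_Integration.integral_add[OF integrable_ind[OF u] integrable_ind[OF v]])
  finally show ?thesis unfolding cond_exp_dyadic_def by (simp add: distrib_left)
qed

lemma Delta_add:
  fixes u v :: "real \<Rightarrow> real"
  assumes u: "integrable M01 u" and v: "integrable M01 v"
  shows "Delta n (\<lambda>y. u y + v y) x = Delta n u x + Delta n v x"
  unfolding Delta_def using cond_exp_add[OF u v] by simp

lemma cond_exp_cong_AE:
  fixes u v :: "real \<Rightarrow> real"
  assumes u: "u \<in> borel_measurable M01" and v: "v \<in> borel_measurable M01"
    and ae: "AE y in M01. u y = v y"
  shows "cond_exp_dyadic k u x = cond_exp_dyadic k v x"
proof -
  have "(LINT y|M01. indicator (dyadic_interval k x) y *\<^sub>R u y) = (LINT y|M01. indicator (dyadic_interval k x) y *\<^sub>R v y)"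
  proof (rule integral_cong_AE)
    show "(\<lambda>y. indicator (dyadic_interval k x) y *\<^sub>R u y) \<in> borel_measurable M01"
      by (rule borel_measurable_scaleR[OF ind_meas u])
    show "(\<lambda>y. indicator (dyadic_interval k x) y *\<^sub>R v y) \<in> borel_measurable M01"
      by (rule borel_measurable_scaleR[OF ind_meas v])
    show "AE y in M01. indicator (dyadic_interval k x) y *\<^sub>R u y = indicator (dyadic_interval k x) y *\<^sub>R v y"
      using ae by eventually_elim simp
  qed
  then show ?thesis unfolding cond_exp_dyadic_def set_lebesgue_integral_def by simp
qed

lemma Delta_cong_AE:
  fixes u v :: "real \<Rightarrow> real"
  assumes u: "u \<in> borel_measurable M01" and v: "v \<in> borel_measurable M01"
    and ae: "AE y in M01. u y = v y"
  shows "Delta n u x = Delta n v x"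
  unfolding Delta_def using cond_exp_cong_AE[OF u v ae] by simp

lemma ennreal_arith1:
  assumes "A \<ge> 0" "B \<ge> 0" "l > 0"
  shows "2 * ennreal A + ennreal (4/l) * ennreal B = ennreal (2*A + 4*B/l)"
proof -
  have e0: "2*A + 4*B/l = 2*A + (4/l)*B" by simp
  have "ennreal (2*A + (4/l)*B) = ennreal (2*A) + ennreal ((4/l)*B)"
    by (rule ennreal_plus) (use assms in auto)
  also have "ennreal ((4/l)*B) = ennreal (4/l) * ennreal B" by (rule ennreal_mult) (use assms in auto)
  also have "ennreal (2*A) = 2 * ennreal A" using assms by (simp add: ennreal_mult)
  finally show ?thesis unfolding e0 by simp
qed

lemma ennreal_arith2:
  assumes "A \<ge> 0" "B \<ge> 0" "l > 0"
  shows "ennreal (2*l) * ennreal A + 2 * ennreal B = ennreal (2*l*A + 2*B)"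
proof -
  have "ennreal (2*l*A + 2*B) = ennreal (2*l*A) + ennreal (2*B)"
    by (rule ennreal_plus) (use assms in auto)
  also have "ennreal (2*l*A) = ennreal (2*l) * ennreal A" by (rule ennreal_mult) (use assms in auto)
  also have "ennreal (2*B) = 2 * ennreal B" using assms by (simp add: ennreal_mult)
  finally show ?thesis by simp
qed

lemma key:
  fixes t :: real and F :: seqfun
  assumes t: "t > 0" and ex: "\<exists>g\<in>iota_H1. \<exists>h\<in>iota_H2. decomp F g h"
  shows "Kfun iota_H1 L1l2_norm iota_H2 L2l2_norm t F \<le> 8 * Kfun L1l2 L1l2_norm L2l2 L2l2_norm t F"
proof -
  obtain g0 h0 where g0: "g0 \<in> iota_H1" and h0: "h0 \<in> iota_H2" and d0: "decomp F g0 h0"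
    using ex by blast
  define f where "f n = (\<lambda>x. g0 n x + h0 n x)" for n
  have gi: "integrable M01 (g0 n)" for n using g0 unfolding iota_H1_def by (auto intro: L1_integrable)
  have hi: "integrable M01 (h0 n)" for n using h0 unfolding iota_H2_def by (auto intro: L2_integrable)
  have fi: "integrable M01 (f n)" for n unfolding f_def
    by (rule Bochner_Integration.integrable_add[OF gi hi])
  define ft where "ft n = Delta n (f n)" for n
  have ftadd: "ft n x = Delta n (g0 n) x + Delta n (h0 n) x" for n x
    unfolding ft_def f_def by (rule Delta_add[OF gi hi])
  have mdg: "AE x in M01. Delta n (g0 n) x = g0 n x" for n
    using g0 unfolding iota_H1_def mart_diff_def by simp
  have mdh: "AE x in M01. Delta n (h0 n) x = h0 n x" for n
    using h0 unfolding iota_H2_def mart_diff_def by simp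
  have ftf: "AE x in M01. ft n x = f n x" for n
    using mdg[of n] mdh[of n] by eventually_elim (simp add: ftadd f_def)
  have "AE x in M01. ft n x = F n x" for n
    using ftf[of n] d0[unfolded decomp_def] by eventually_elim (simp add: f_def)
  then have ftF: "AE x in M01. \<forall>n. ft n x = F n x" by (simp add: AE_all_countable)
  have inv1: "inv_lvl n (ft n)" for n unfolding ft_def by (rule inv_Delta)
  have inv2: "inv_lvl (n-1) (\<lambda>x. (ft n x)\<^sup>2)" for n
  proof (cases n)
    case 0
    then show ?thesis using inv_lvl_comp[OF inv1[of 0]] by simp
  next
    case (Suc m)
    show ?thesis unfolding inv_lvl_def
    proof (intro allI impI)
      fix x y assume "\<lfloor>(2::real)^(n-1) * x\<rfloor> = \<lfloor>(2::real)^(n-1) * y\<rfloor>"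
      then have "\<lfloor>(2::real)^m * x\<rfloor> = \<lfloor>(2::real)^m * y\<rfloor>" using Suc by simp
      then have "\<bar>ft n x\<bar> = \<bar>ft n y\<bar>" unfolding ft_def Suc by (rule Delta_abs[OF fi])
      then have "\<bar>ft n x\<bar>\<^sup>2 = \<bar>ft n y\<bar>\<^sup>2" by simp
      then show "(ft n x)\<^sup>2 = (ft n y)\<^sup>2" by simp
    qed
  qed
  have mft: "ft n \<in> borel_measurable M01" for n by (rule inv_meas[OF inv1])
  have mf: "f n \<in> borel_measurable M01" for n by (rule borel_measurable_integrable[OF fi])
  have fx: "Delta n (ft n) x = ft n x" for n x
  proof -
    have "Delta n (ft n) x = Delta n (f n) x" by (rule Delta_cong_AE[OF mft mf ftf])
    then show ?thesis unfolding ft_def by simp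
  qed
  define KY where "KY = Kfun iota_H1 L1l2_norm iota_H2 L2l2_norm t F"
  have bound: "KY \<le> 8 * (L1l2_norm g + ennreal t * L2l2_norm h)"
    if g: "g \<in> L1l2" and h: "h \<in> L2l2" and dgh: "decomp F g h" for g h
  proof -
    have ae: "AE x in M01. \<forall>n. ft n x = g n x + h n x"
      using ftF dgh[unfolded decomp_def] by eventually_elim simp
    have gfin: "L1l2_norm g < \<infinity>" using g unfolding L1l2_def by simp
    have "esqrt (\<integral>\<^sup>+ x. l2sq h x \<partial>M01) < \<infinity>" using h unfolding L2l2_def L2l2_norm_def by simp
    then have hfin: "(\<integral>\<^sup>+ x. l2sq h x \<partial>M01) < \<infinity>" by (rule esqrt_fin)
    define A where "A = enn2real (L1l2_norm g)"
    define B where "B = enn2real (\<integral>\<^sup>+ x. l2sq h x \<partial>M01)"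
    have A0: "A \<ge> 0" and B0: "B \<ge> 0" unfolding A_def B_def by simp_all
    have gA: "L1l2_norm g = ennreal A" unfolding A_def using gfin by (simp add: less_top)
    have hB: "(\<integral>\<^sup>+ x. l2sq h x \<partial>M01) = ennreal B" unfolding B_def using hfin by (simp add: less_top)
    have hN: "L2l2_norm h = ennreal (sqrt B)" unfolding L2l2_norm_def hB using B0 by (rule esqrt_ennreal)
    define l where "l = (if A + t * sqrt B > 0 then (A + t * sqrt B) / t\<^sup>2 else 1)"
    have l0: "l > 0" and lb: "2*A + 4*B/l + t * sqrt (2*l*A + 2*B) \<le> 8 * (A + t * sqrt B)"
      using RC[OF A0 B0 t l_def] by simp_all
    define W where "W n x = (if (\<Sum>k<Suc n. (ft k x)\<^sup>2) \<le> l\<^sup>2 then 1 else (0::real))" for n x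
    define a where "a n x = (1 - W n x) * ft n x" for n x
    define b where "b n x = W n x * ft n x" for n x
    note c = core[OF l0 inv1 inv2 fx g h ae W_def a_def b_def]
    have dab: "decomp F a b" unfolding decomp_def
      using ftF by eventually_elim (simp add: a_def b_def algebra_simps)
    have "KY \<le> L1l2_norm a + ennreal t * L2l2_norm b"
      unfolding KY_def Kfun_def by (rule INF_lower2[of "(a, b)"]) (use c(1,2) dab in auto)
    also have "L1l2_norm a \<le> ennreal (2*A + 4*B/l)"
      using c(3) unfolding gA hB ennreal_arith1[OF A0 B0 l0] .
    also have "L2l2_norm b \<le> ennreal (sqrt (2*l*A + 2*B))"
    proof -
      have "(\<integral>\<^sup>+x. l2sq b x \<partial>M01) \<le> ennreal (2*l*A + 2*B)"
        using c(4) unfolding gA hB ennreal_arith2[OF A0 B0 l0] .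
      then have "L2l2_norm b \<le> esqrt (ennreal (2*l*A + 2*B))"
        unfolding L2l2_norm_def by (rule esqrt_mono)
      also have "\<dots> = ennreal (sqrt (2*l*A + 2*B))" by (rule esqrt_ennreal) (use A0 B0 l0 in simp)
      finally show ?thesis .
    qed
    also have "ennreal (2*A + 4*B/l) + ennreal t * ennreal (sqrt (2*l*A + 2*B))
             = ennreal (2*A + 4*B/l + t * sqrt (2*l*A + 2*B))"
      using A0 B0 l0 t by (simp add: ennreal_plus ennreal_mult)
    also have "\<dots> \<le> ennreal (8 * (A + t * sqrt B))" using lb by (rule ennreal_leI)
    also have "\<dots> = 8 * (L1l2_norm g + ennreal t * L2l2_norm h)"
      unfolding gA hN using A0 B0 t by (simp add: ennreal_plus ennreal_mult)
    finally show ?thesis by (simp add: mult_left_mono add_left_mono)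
  qed
  have "KY / 8 \<le> Kfun L1l2 L1l2_norm L2l2 L2l2_norm t F"
    unfolding Kfun_def
  proof (rule INF_greatest)
    fix gh assume "gh \<in> {(g, h). g \<in> L1l2 \<and> h \<in> L2l2 \<and> decomp F g h}"
    then obtain g h where "gh = (g, h)" "g \<in> L1l2" "h \<in> L2l2" "decomp F g h" by blast
    then show "KY / 8 \<le> L1l2_norm (fst gh) + ennreal t * L2l2_norm (snd gh)"
      using bound by (intro divide_le_posI_ennreal) auto
  qed
  then have "KY / 8 * 8 \<le> Kfun L1l2 L1l2_norm L2l2 L2l2_norm t F * 8" by (rule mult_right_mono) simp
  moreover have "KY / 8 * 8 = KY" by (simp add: ennreal_divide_times)
  ultimately show ?thesis unfolding KY_def by (simp add: mult.commute)
qed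

theorem corollary4p11:
  shows "K_closed iota_H1 L1l2_norm iota_H2 L2l2_norm L1l2 L1l2_norm L2l2 L2l2_norm"
  unfolding K_closed_def
proof (intro exI[of _ 8] allI impI)
  fix t :: real and F :: seqfun
  assume "t > 0" "\<exists>g\<in>iota_H1. \<exists>h\<in>iota_H2. decomp F g h"
  then show "Kfun iota_H1 L1l2_norm iota_H2 L2l2_norm t F
        \<le> ennreal 8 * Kfun L1l2 L1l2_norm L2l2 L2l2_norm t F"
    using key by simp
qed

end
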